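(* Let $\Gamma$ be a countably infinite discrete amenable group and $f\in\mathbb{Z}\Gamma$. The following are equivalent: (1) $f$ is a right zero-divisor in $\mathbb{Z}\Gamma$; (2) $\{v\in\ell^2(\Gamma,\mathbb{R}): f^*\cdot v=0\}\neq\{0\}$; (3) $f$ is a left zero-divisor in $\mathbb{Z}\Gamma$; (4) $\{v\in\ell^2(\Gamma,\mathbb{R}): f\cdot v=0\}\neq\{0\}$; (5) $\{v\in\ell^2(\Gamma,\mathbb{R}): v\cdot f^*=0\}\neq\{0\}$.
   Context: $\mathbb{Z}\Gamma$ is the integral group ring. For $g=\sum_\gamma g_\gamma\cdot\gamma$, the adjoint is $g^*=\sum_\gamma g_\gamma\cdot\gamma^{-1}$. $f$ is a right (resp. left) zero-divisor if $gf=0$ (resp. $fg=0$) for some nonzero $g\in\mathbb{Z}\Gamma$. For $v\in\ell^2(\Gamma,\mathbb{R})$ and $h\in\mathbb{Z}\Gamma$, the convolutions are $(h\cdot v)_\gamma=\sum_{\gamma'}h_{\gamma'}v_{\gamma'^{-1}\gamma}$ and $(v\cdot h)_\gamma=\sum_{\gamma'}v_{\gamma'}h_{\gamma'^{-1}\gamma}$. *)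

theory Defs
  imports "HOL-Analysis.Analysis" "HOL-Algebra.Group"
begin

definition amenable :: "('a, 'b) monoid_scheme \<Rightarrow> bool" where
  "amenable G \<longleftrightarrow> (\<forall>K e. finite K \<and> K \<subseteq> carrier G \<and> (e::real) > 0 \<longrightarrow>
     (\<exists>F. finite F \<and> F \<noteq> {} \<and> F \<subseteq> carrier G \<and>
        (\<forall>g\<in>K. real (card (((\<lambda>x. g \<otimes>\<^bsub>G\<^esub> x) ` F - F) \<union> (F - (\<lambda>x. g \<otimes>\<^bsub>G\<^esub> x) ` F)))
                 < e * real (card F))))"

definition group_ring :: "('a, 'b) monoid_scheme \<Rightarrow> ('a \<Rightarrow> int) set" where
  "group_ring G = {f. finite {x \<in> carrier G. f x \<noteq> 0} \<and> (\<forall>x. x \<notin> carrier G \<longrightarrow> f x = 0)}"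

definition l2 :: "('a, 'b) monoid_scheme \<Rightarrow> ('a \<Rightarrow> real) set" where
  "l2 G = {v. (\<lambda>x. (v x)\<^sup>2) summable_on carrier G \<and> (\<forall>x. x \<notin> carrier G \<longrightarrow> v x = 0)}"

definition adjoint :: "('a, 'b) monoid_scheme \<Rightarrow> ('a \<Rightarrow> 'c::zero) \<Rightarrow> 'a \<Rightarrow> 'c" where
  "adjoint G f = (\<lambda>x. if x \<in> carrier G then f (inv\<^bsub>G\<^esub> x) else 0)"

text \<open>Convolution (a . b)(gamma) = sum over gamma' of a(gamma') b(gamma'^-1 gamma), where the
  left factor a is finitely supported (sum over the support of a).\<close>
definition lconv :: "('a, 'b) monoid_scheme \<Rightarrow> ('a \<Rightarrow> 'c::comm_ring) \<Rightarrow> ('a \<Rightarrow> 'c) \<Rightarrow> 'a \<Rightarrow> 'c" where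
  "lconv G a b = (\<lambda>y. if y \<in> carrier G then
      (\<Sum>x\<in>{x \<in> carrier G. a x \<noteq> 0}. a x * b (inv\<^bsub>G\<^esub> x \<otimes>\<^bsub>G\<^esub> y)) else 0)"

text \<open>Same convolution formula, where the right factor b is finitely supported
  (sum over those gamma' with b(gamma'^-1 gamma) nonzero).\<close>
definition rconv :: "('a, 'b) monoid_scheme \<Rightarrow> ('a \<Rightarrow> 'c::comm_ring) \<Rightarrow> ('a \<Rightarrow> 'c) \<Rightarrow> 'a \<Rightarrow> 'c" where
  "rconv G a b = (\<lambda>y. if y \<in> carrier G then
      (\<Sum>x\<in>{x \<in> carrier G. b (inv\<^bsub>G\<^esub> x \<otimes>\<^bsub>G\<^esub> y) \<noteq> 0}. a x * b (inv\<^bsub>G\<^esub> x \<otimes>\<^bsub>G\<^esub> y)) else 0)"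

definition right_zero_divisor :: "('a, 'b) monoid_scheme \<Rightarrow> ('a \<Rightarrow> int) \<Rightarrow> bool" where
  "right_zero_divisor G f \<longleftrightarrow> (\<exists>g \<in> group_ring G. g \<noteq> (\<lambda>_. 0) \<and> lconv G g f = (\<lambda>_. 0))"

definition left_zero_divisor :: "('a, 'b) monoid_scheme \<Rightarrow> ('a \<Rightarrow> int) \<Rightarrow> bool" where
  "left_zero_divisor G f \<longleftrightarrow> (\<exists>g \<in> group_ring G. g \<noteq> (\<lambda>_. 0) \<and> lconv G f g = (\<lambda>_. 0))"

end

theory Submission imports Defs begin


definition ipE :: "'a set \<Rightarrow> ('a \<Rightarrow> int) \<Rightarrow> ('a \<Rightarrow> int) \<Rightarrow> int" where
  "ipE E a b = (\<Sum>y\<in>E. a y * b y)"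

lemma GS:
  fixes L :: "('a \<Rightarrow> int) \<Rightarrow> ('a \<Rightarrow> int)"
  assumes lin: "\<And>c a d b (I::('a \<Rightarrow> int) set) y. finite I \<Longrightarrow> L (\<lambda>x. c * a x - (\<Sum>i\<in>I. d i * b i x)) y
                   = c * L a y - (\<Sum>i\<in>I. d i * L (b i) y)"
    and supp: "\<And>u y. (\<forall>x. x \<notin> F \<longrightarrow> u x = 0) \<Longrightarrow> y \<notin> E \<Longrightarrow> L u y = 0"
    and finE: "finite E"
    and fin: "finite X" and XF: "X \<subseteq> F"
  shows "(\<exists>u. (\<forall>x. x \<notin> X \<longrightarrow> u x = 0) \<and> u \<noteq> (\<lambda>_. 0) \<and> L u = (\<lambda>_. 0)) \<or>
         (\<exists>U. finite U \<and> card U = card X \<and> (\<forall>u\<in>U. \<forall>x. x \<notin> X \<longrightarrow> u x = 0) \<and>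
              (\<forall>u\<in>U. ipE E (L u) (L u) \<noteq> 0) \<and>
              (\<forall>u\<in>U. \<forall>w\<in>U. u \<noteq> w \<longrightarrow> ipE E (L u) (L w) = 0))"
  using fin XF
proof (induct X rule: finite_induct)
  case empty
  then show ?case by (intro disjI2 exI[of _ "{}"]) auto
next
  case (insert x X)
  have IH: "(\<exists>u. (\<forall>x. x \<notin> X \<longrightarrow> u x = 0) \<and> u \<noteq> (\<lambda>_. 0) \<and> L u = (\<lambda>_. 0)) \<or>
         (\<exists>U. finite U \<and> card U = card X \<and> (\<forall>u\<in>U. \<forall>x. x \<notin> X \<longrightarrow> u x = 0) \<and>
              (\<forall>u\<in>U. ipE E (L u) (L u) \<noteq> 0) \<and>
              (\<forall>u\<in>U. \<forall>w\<in>U. u \<noteq> w \<longrightarrow> ipE E (L u) (L w) = 0))"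
    using insert.hyps(3)[OF subset_trans[OF subset_insertI insert.prems]] .
  from IH consider (A) u where "\<forall>z. z \<notin> X \<longrightarrow> u z = 0" "u \<noteq> (\<lambda>_. 0)" "L u = (\<lambda>_. 0)"
    | (B) U where "finite U" "card U = card X" "\<forall>u\<in>U. \<forall>z. z \<notin> X \<longrightarrow> u z = 0"
       "\<forall>u\<in>U. ipE E (L u) (L u) \<noteq> 0" "\<forall>u\<in>U. \<forall>w\<in>U. u \<noteq> w \<longrightarrow> ipE E (L u) (L w) = 0"
    by (elim disjE exE conjE) (assumption | rule that)+
  then show ?case
  proof cases
    case A then show ?thesis by (intro disjI1 exI[of _ u]) auto
  next
    case B
    define ip where "ip = ipE E"
    define \<delta> where "\<delta> = (\<lambda>z. if z = x then 1 else (0::int))"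
    define P where "P = (\<Prod>u\<in>U. ip (L u) (L u))"
    define d where "d = (\<lambda>u. (\<Prod>u'\<in>U - {u}. ip (L u') (L u')) * ip (L \<delta>) (L u))"
    define u0 where "u0 = (\<lambda>z. P * \<delta> z - (\<Sum>u\<in>U. d u * u z))"
    have Lu0: "L u0 y = P * L \<delta> y - (\<Sum>u\<in>U. d u * L u y)" for y
      unfolding u0_def using lin[OF B(1), of P \<delta> d "\<lambda>u. u" y] by simp
    have P0: "P \<noteq> 0" unfolding P_def ip_def using B by auto
    have u0x: "u0 x = P" unfolding u0_def \<delta>_def using B(3) insert.hyps(2) by (simp add: sum.neutral)
    have u0out: "\<forall>z. z \<notin> insert x X \<longrightarrow> u0 z = 0" unfolding u0_def \<delta>_def using B(3) by (auto intro!: sum.neutral)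
    have ipsym: "ip a b = ip b a" for a b unfolding ip_def ipE_def by (simp add: mult.commute)
    have orth: "ip (L u0) (L w) = 0" if w: "w \<in> U" for w
    proof -
      have "ip (L u0) (L w) = P * ip (L \<delta>) (L w) - (\<Sum>u\<in>U. d u * ip (L u) (L w))"
        unfolding ip_def ipE_def Lu0
        by (simp add: left_diff_distrib sum_subtractf sum_distrib_left sum_distrib_right mult.assoc sum.swap[of _ E])
      also have "(\<Sum>u\<in>U. d u * ip (L u) (L w)) = d w * ip (L w) (L w)"
        using B(1,5) w unfolding ip_def by (subst sum.remove[of U w]) auto
      also have "d w * ip (L w) (L w) = P * ip (L \<delta>) (L w)"
        unfolding d_def P_def using B(1) w by (simp add: prod.remove[of U w] algebra_simps)
      finally show ?thesis by simp
    qed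
    show ?thesis
    proof (cases "ip (L u0) (L u0) = 0")
      case True
      have "L u0 y = 0" for y
      proof (cases "y \<in> E")
        case True
        have "(\<Sum>y\<in>E. (L u0 y)^2) = 0" using \<open>ip (L u0) (L u0) = 0\<close>
          unfolding ip_def ipE_def by (simp add: power2_eq_square)
        then have "\<forall>y\<in>E. (L u0 y)^2 = 0" using finE by (subst (asm) sum_nonneg_eq_0_iff) auto
        then show ?thesis using True by simp
      next
        case False
        then show ?thesis using supp u0out insert.prems by blast
      qed
      then show ?thesis using u0out u0x P0
        by (intro disjI1 exI[of _ u0]) (auto simp: fun_eq_iff)
    next
      case False
      have nin: "u0 \<notin> U" using B(3) insert.hyps(2) u0x P0 by auto
      show ?thesis
      proof (intro disjI2 exI[of _ "insert u0 U"] conjI)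
        show "finite (insert u0 U)" using B(1) by simp
        show "card (insert u0 U) = card (insert x X)" using B(1,2) nin insert.hyps by simp
        show "\<forall>u\<in>insert u0 U. \<forall>z. z \<notin> insert x X \<longrightarrow> u z = 0" using u0out B(3) by auto
        show "\<forall>u\<in>insert u0 U. ipE E (L u) (L u) \<noteq> 0" using False B(4) unfolding ip_def by auto
        show "\<forall>u\<in>insert u0 U. \<forall>w\<in>insert u0 U. u \<noteq> w \<longrightarrow> ipE E (L u) (L w) = 0"
        proof (intro ballI impI)
          fix u w assume u: "u \<in> insert u0 U" and w: "w \<in> insert u0 U" and uw: "u \<noteq> w"
          show "ipE E (L u) (L w) = 0"
          proof (cases "u = u0")
            case True
            then have "w \<in> U" using w uw by auto
            then show ?thesis using orth[of w] True unfolding ip_def by simp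
          next
            case False
            show ?thesis
            proof (cases "w = u0")
              case True
              then have "u \<in> U" using u False by auto
              then show ?thesis using orth[of u] ipsym[of "L u" "L u0"] True unfolding ip_def by simp
            next
              case False2: False
              then show ?thesis using u w uw False B(5) by auto
            qed
          qed
        qed
      qed
    qed
  qed
qed



lemma count_bound:
  fixes w :: "'u \<Rightarrow> 'a \<Rightarrow> real" and r :: "'a \<Rightarrow> 'a \<Rightarrow> real"
  assumes finW: "finite W" and finE: "finite E"
    and nz: "\<forall>i\<in>W. (\<Sum>z\<in>E. (w i z)\<^sup>2) \<noteq> 0"
    and orth: "\<forall>i\<in>W. \<forall>j\<in>W. i \<noteq> j \<longrightarrow> (\<Sum>z\<in>E. w i z * w j z) = 0"
    and rorth: "\<forall>y\<in>E. \<forall>i\<in>W. (\<Sum>z\<in>E. w i z * r y z) = 0"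
    and rdiag: "\<forall>y\<in>E. r y y = a"
    and rbd: "\<forall>y\<in>E. (\<Sum>z\<in>E. (r y z)\<^sup>2) \<le> N"
    and Npos: "N > 0"
  shows "real (card W) \<le> real (card E) * (1 - a\<^sup>2 / N)"
proof -
  define n where "n i = (\<Sum>z\<in>E. (w i z)\<^sup>2)" for i
  have npos: "n i > 0" if "i \<in> W" for i
    using nz that unfolding n_def by (metis sum_nonneg zero_le_power2 order_le_less)
  define s where "s y = (\<Sum>i\<in>W. (w i y)\<^sup>2 / n i)" for y
  have sb: "s y \<le> 1 - a\<^sup>2 / N" if y: "y \<in> E" for y
  proof -
    define c where "c i = w i y / n i" for i
    define p where "p z = (\<Sum>i\<in>W. c i * w i z)" for z
    define e where "e z = (if z = y then 1 else (0::real))" for z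
    define q where "q z = e z - p z" for z
    have sume: "(\<Sum>z\<in>E. e z * g z) = g y" for g
    proof -
      have "(\<Sum>z\<in>E. e z * g z) = (\<Sum>z\<in>E. if z = y then g z else 0)"
        by (rule sum.cong) (auto simp: e_def)
      then show ?thesis using y finE by simp
    qed
    have pr: "(\<Sum>z\<in>E. p z * r y z) = 0"
    proof -
      have "(\<Sum>z\<in>E. p z * r y z) = (\<Sum>z\<in>E. \<Sum>i\<in>W. c i * (w i z * r y z))"
        unfolding p_def by (simp add: sum_distrib_right mult.assoc)
      also have "\<dots> = (\<Sum>i\<in>W. c i * (\<Sum>z\<in>E. w i z * r y z))"
        by (subst sum.swap) (simp add: sum_distrib_left)
      also have "\<dots> = 0" using rorth y by simp
      finally show ?thesis .
    qed
    have pp: "(\<Sum>z\<in>E. p z * p z) = s y"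
    proof -
      have "(\<Sum>z\<in>E. p z * p z) = (\<Sum>i\<in>W. \<Sum>j\<in>W. c i * c j * (\<Sum>z\<in>E. w i z * w j z))"
        unfolding p_def
        by (simp add: sum_distrib_right sum_distrib_left sum.swap[of _ E] mult.commute mult.left_commute)
      also have "\<dots> = (\<Sum>i\<in>W. c i * c i * n i)"
      proof (rule sum.cong[OF refl])
        fix i assume i: "i \<in> W"
        have "(\<Sum>j\<in>W. c i * c j * (\<Sum>z\<in>E. w i z * w j z)) = c i * c i * (\<Sum>z\<in>E. w i z * w i z)"
        proof -
          have "(\<Sum>j\<in>W - {i}. c i * c j * (\<Sum>z\<in>E. w i z * w j z)) = 0"
          proof (rule sum.neutral, rule ballI)
            fix j assume j: "j \<in> W - {i}"
            then have jW: "j \<in> W" and ij: "i \<noteq> j" by auto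
            then have "(\<Sum>z\<in>E. w i z * w j z) = 0" using orth i by simp
            then show "c i * c j * (\<Sum>z\<in>E. w i z * w j z) = 0" by simp
          qed
          moreover have "(\<Sum>j\<in>W. c i * c j * (\<Sum>z\<in>E. w i z * w j z)) = c i * c i * (\<Sum>z\<in>E. w i z * w i z) + (\<Sum>j\<in>W - {i}. c i * c j * (\<Sum>z\<in>E. w i z * w j z))"
            by (rule sum.remove[OF finW i])
          ultimately show ?thesis by simp
        qed
        then show "(\<Sum>j\<in>W. c i * c j * (\<Sum>z\<in>E. w i z * w j z)) = c i * c i * n i"
          by (simp add: n_def power2_eq_square)
      qed
      also have "\<dots> = s y"
        unfolding s_def c_def using npos by (intro sum.cong) (auto simp: power2_eq_square field_simps)
      finally show ?thesis .
    qed
    have ep: "(\<Sum>z\<in>E. e z * p z) = s y"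
    proof -
      have "(\<Sum>z\<in>E. e z * p z) = p y" by (rule sume)
      also have "\<dots> = s y" unfolding p_def s_def c_def using npos
        by (intro sum.cong) (auto simp: power2_eq_square field_simps)
      finally show ?thesis .
    qed
    have ee: "(\<Sum>z\<in>E. e z * e z) = 1" using sume[of e] by (simp add: e_def)
    have er: "(\<Sum>z\<in>E. e z * r y z) = a" using sume[of "r y"] rdiag y by simp
    have qr: "(\<Sum>z\<in>E. q z * r y z) = a" unfolding q_def
      using er pr by (simp add: left_diff_distrib sum_subtractf)
    have qq: "(\<Sum>z\<in>E. (q z)\<^sup>2) = 1 - s y"
    proof -
      have "(\<Sum>z\<in>E. (q z)\<^sup>2) = (\<Sum>z\<in>E. e z * e z) - 2 * (\<Sum>z\<in>E. e z * p z) + (\<Sum>z\<in>E. p z * p z)"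
        unfolding q_def by (simp add: power2_eq_square algebra_simps sum.distrib sum_subtractf sum_distrib_left)
      then show ?thesis using ee ep pp by simp
    qed
    have cs: "a\<^sup>2 \<le> (1 - s y) * (\<Sum>z\<in>E. (r y z)\<^sup>2)"
      using Cauchy_Schwarz_ineq_sum[of q "r y" E] qr qq by simp
    have "0 \<le> 1 - s y" using qq by (metis sum_nonneg zero_le_power2)
    then have "a\<^sup>2 \<le> (1 - s y) * N" using cs rbd y by (meson mult_left_mono order_trans)
    then show ?thesis using Npos by (simp add: field_simps)
  qed
  have "(\<Sum>y\<in>E. s y) = (\<Sum>i\<in>W. (\<Sum>y\<in>E. (w i y)\<^sup>2) / n i)"
    unfolding s_def by (simp add: sum.swap[of _ E] sum_divide_distrib)
  also have "\<dots> = (\<Sum>i\<in>W. 1)" proof (rule sum.cong[OF refl]) fix i assume "i \<in> W" then have "n i > 0" by (rule npos) then show "(\<Sum>y\<in>E. (w i y)\<^sup>2) / n i = 1" by (simp add: n_def) qed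
  also have "\<dots> = real (card W)" by simp
  finally have "real (card W) = (\<Sum>y\<in>E. s y)" ..
  also have "\<dots> \<le> (\<Sum>y\<in>E. 1 - a\<^sup>2 / N)" using sb by (rule sum_mono)
  also have "\<dots> = real (card E) * (1 - a\<^sup>2 / N)" by simp
  finally show ?thesis .
qed



context group begin

lemma gr_fin: "f \<in> group_ring G \<Longrightarrow> finite {x \<in> carrier G. f x \<noteq> 0}"
  by (simp add: group_ring_def)
lemma gr_out: "f \<in> group_ring G \<Longrightarrow> x \<notin> carrier G \<Longrightarrow> f x = 0"
  by (simp add: group_ring_def)

lemma adjoint_adjoint:
  assumes "\<And>x. x \<notin> carrier G \<Longrightarrow> f x = 0"
  shows "adjoint G (adjoint G f) = f"
  using assms by (auto simp: adjoint_def fun_eq_iff)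

lemma adjoint_gr: assumes "f \<in> group_ring G" shows "adjoint G f \<in> group_ring G"
proof -
  have "{x \<in> carrier G. adjoint G f x \<noteq> 0} = (\<lambda>x. inv x) ` {x \<in> carrier G. f x \<noteq> 0}"
    by (auto simp: adjoint_def image_iff intro!: exI[of _ "inv _"])
  thus ?thesis using assms by (auto simp: group_ring_def adjoint_def)
qed

lemma adjoint_zero_iff:
  assumes "\<And>x. x \<notin> carrier G \<Longrightarrow> f x = 0"
  shows "adjoint G f = (\<lambda>_. 0) \<longleftrightarrow> f = (\<lambda>_. 0)"
  by (metis adjoint_adjoint assms adjoint_def)

lemma lconv_nz:
  assumes "finite {x \<in> carrier G. a x \<noteq> 0}" "y \<in> carrier G"
  shows "lconv G a b y = (\<Sum>x\<in>{x \<in> carrier G. a x * b (inv x \<otimes> y) \<noteq> 0}. a x * b (inv x \<otimes> y))"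
  using assms unfolding lconv_def
  by (auto intro!: sum.mono_neutral_right)

lemma lconv_out: "y \<notin> carrier G \<Longrightarrow> lconv G a b y = 0"
  by (simp add: lconv_def)

lemma lconv_cast:
  "lconv G (\<lambda>x. real_of_int (a x)) (\<lambda>x. real_of_int (b x)) = (\<lambda>y. real_of_int (lconv G a b y))"
  by (auto simp: lconv_def fun_eq_iff)

lemma antihom:
  assumes "a \<in> group_ring G" "b \<in> group_ring G" "y \<in> carrier G"
  shows "lconv G a b (inv y) = lconv G (adjoint G b) (adjoint G a) y"
proof -
  have fb: "finite {x \<in> carrier G. adjoint G b x \<noteq> 0}"
    using adjoint_gr[OF assms(2)] by (simp add: group_ring_def)
  have "lconv G a b (inv y) = (\<Sum>x\<in>{x \<in> carrier G. a x * b (inv x \<otimes> inv y) \<noteq> 0}. a x * b (inv x \<otimes> inv y))"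
    by (rule lconv_nz) (use assms gr_fin in auto)
  also have "\<dots> = (\<Sum>t\<in>{x \<in> carrier G. adjoint G b x * adjoint G a (inv x \<otimes> y) \<noteq> 0}. adjoint G b t * adjoint G a (inv t \<otimes> y))"
  proof (rule sum.reindex_bij_witness[where i="\<lambda>t. inv y \<otimes> t" and j="\<lambda>x. y \<otimes> x"])
    fix t assume t: "t \<in> {x \<in> carrier G. adjoint G b x * adjoint G a (inv x \<otimes> y) \<noteq> 0}"
    then have tc: "t \<in> carrier G" by auto
    have e1: "inv (y \<otimes> (inv y \<otimes> t)) = inv t" using tc assms(3) by (simp add: m_assoc[symmetric])
    have e2: "inv (inv y \<otimes> t) \<otimes> inv y = inv t" using tc assms(3) by (simp add: inv_mult_group m_assoc)
    have e3: "inv t \<otimes> y = inv (inv y \<otimes> t)" using tc assms(3) by (simp add: inv_mult_group)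
    show "y \<otimes> (inv y \<otimes> t) = t" using tc assms(3) by (simp add: m_assoc[symmetric])
    show "inv y \<otimes> t \<in> {x \<in> carrier G. a x * b (inv x \<otimes> inv y) \<noteq> 0}"
      using t tc assms(3) by (auto simp: adjoint_def e2 e3 mult.commute)
  next
    fix x assume x: "x \<in> {x \<in> carrier G. a x * b (inv x \<otimes> inv y) \<noteq> 0}"
    then have xc: "x \<in> carrier G" by auto
    have e2: "inv (y \<otimes> x) = inv x \<otimes> inv y" using xc assms(3) by (simp add: inv_mult_group)
    have e3: "inv (y \<otimes> x) \<otimes> y = inv x" using xc assms(3) by (simp add: inv_mult_group m_assoc)
    have e4: "inv x \<otimes> inv y \<otimes> y = inv x" using xc assms(3) by (simp add: m_assoc)
    show "inv y \<otimes> (y \<otimes> x) = x" using xc assms(3) by (simp add: m_assoc[symmetric])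
    show "y \<otimes> x \<in> {x \<in> carrier G. adjoint G b x * adjoint G a (inv x \<otimes> y) \<noteq> 0}"
      using x xc assms(3) by (auto simp: adjoint_def e2 e3 e4 mult.commute)
    show "adjoint G b (y \<otimes> x) * adjoint G a (inv (y \<otimes> x) \<otimes> y) = a x * b (inv x \<otimes> inv y)"
      using xc assms(3) by (simp add: adjoint_def e2 e3 e4 mult.commute)
  qed
  also have "\<dots> = lconv G (adjoint G b) (adjoint G a) y"
    by (rule lconv_nz[symmetric]) (use assms fb in auto)
  finally show ?thesis .
qed

lemma rconv_adj:
  fixes v f :: "'a \<Rightarrow> real"
  assumes "y \<in> carrier G"
  shows "rconv G v (adjoint G f) y = lconv G f (adjoint G v) (inv y)"
  unfolding rconv_def lconv_def using assms
proof (simp, intro sum.reindex_bij_witness[where i="\<lambda>z. y \<otimes> z" and j="\<lambda>x. inv y \<otimes> x"])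
  fix x assume x: "x \<in> {x \<in> carrier G. adjoint G f (inv x \<otimes> y) \<noteq> 0}"
  then have xc: "x \<in> carrier G" by auto
  have e1: "inv (inv x \<otimes> y) = inv y \<otimes> x" using xc assms by (simp add: inv_mult_group)
  have e2: "inv (inv y \<otimes> x) \<otimes> inv y = inv x" using xc assms by (simp add: inv_mult_group m_assoc)
  show "y \<otimes> (inv y \<otimes> x) = x" using xc assms by (simp add: m_assoc[symmetric])
  show "inv y \<otimes> x \<in> {x \<in> carrier G. f x \<noteq> 0}" using x xc assms by (auto simp: adjoint_def e1)
  show "f (inv y \<otimes> x) * adjoint G v (inv (inv y \<otimes> x) \<otimes> inv y) = v x * adjoint G f (inv x \<otimes> y)"
    using xc assms by (simp add: adjoint_def e1 e2 mult.commute)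
next
  fix z assume z: "z \<in> {x \<in> carrier G. f x \<noteq> 0}"
  then have zc: "z \<in> carrier G" by auto
  have e1: "inv (inv (y \<otimes> z) \<otimes> y) = z" using zc assms by (simp add: inv_mult_group m_assoc)
  show "inv y \<otimes> (y \<otimes> z) = z" using zc assms by (simp add: m_assoc[symmetric])
  show "y \<otimes> z \<in> {x \<in> carrier G. adjoint G f (inv x \<otimes> y) \<noteq> 0}"
    using z zc assms by (auto simp: adjoint_def e1)
qed

lemma rconv_zero_iff:
  fixes v f :: "'a \<Rightarrow> real"
  shows "rconv G v (adjoint G f) = (\<lambda>_. 0) \<longleftrightarrow> lconv G f (adjoint G v) = (\<lambda>_. 0)"
proof
  assume h: "rconv G v (adjoint G f) = (\<lambda>_. 0)"
  show "lconv G f (adjoint G v) = (\<lambda>_. 0)"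
  proof
    fix w show "lconv G f (adjoint G v) w = 0"
    proof (cases "w \<in> carrier G")
      case True
      then show ?thesis using rconv_adj[of "inv w" v f] h by (metis inv_closed inv_inv)
    qed (simp add: lconv_out)
  qed
next
  assume h: "lconv G f (adjoint G v) = (\<lambda>_. 0)"
  show "rconv G v (adjoint G f) = (\<lambda>_. 0)"
  proof
    fix w show "rconv G v (adjoint G f) w = 0"
    proof (cases "w \<in> carrier G")
      case True
      then show ?thesis using rconv_adj[of w v f] h by metis
    qed (simp add: rconv_def)
  qed
qed

lemma l2_adjoint: assumes "v \<in> l2 G" shows "adjoint G v \<in> l2 G"
proof -
  have "(\<lambda>x. (adjoint G v x)\<^sup>2) summable_on carrier G \<longleftrightarrow> (\<lambda>x. (v x)\<^sup>2) summable_on carrier G"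
    by (rule summable_on_reindex_bij_witness[where i="\<lambda>x. inv x" and j="\<lambda>x. inv x"])
       (auto simp: adjoint_def)
  then show ?thesis using assms by (auto simp: l2_def adjoint_def)
qed

lemma l2_out: "v \<in> l2 G \<Longrightarrow> x \<notin> carrier G \<Longrightarrow> v x = 0"
  by (simp add: l2_def)

lemma l2_fin: assumes "finite {x \<in> carrier G. v x \<noteq> 0}" "\<And>x. x \<notin> carrier G \<Longrightarrow> v x = 0"
  shows "v \<in> l2 G"
proof -
  have "(\<lambda>x. (v x)\<^sup>2) summable_on {x \<in> carrier G. v x \<noteq> 0}" using assms(1) by simp
  then have "(\<lambda>x. (v x)\<^sup>2) summable_on carrier G"
    by (subst summable_on_cong_neutral[where g="\<lambda>x. (v x)\<^sup>2" and T="{x \<in> carrier G. v x \<noteq> 0}"]) auto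
  then show ?thesis using assms by (simp add: l2_def)
qed


lemma adj_conv:
  fixes v :: "'a \<Rightarrow> real"
  assumes y: "y \<in> carrier G"
  shows "lconv G (\<lambda>x. real_of_int (adjoint G f x)) v y
         = (\<Sum>s\<in>{x \<in> carrier G. f x \<noteq> 0}. real_of_int (f s) * v (s \<otimes> y))"
  unfolding lconv_def using y
proof (simp, intro sum.reindex_bij_witness[where i="\<lambda>x. inv x" and j="\<lambda>x. inv x"])
  fix t assume t: "t \<in> {x \<in> carrier G. f x \<noteq> 0}"
  then show "inv (inv t) = t" by auto
  show "inv t \<in> {x \<in> carrier G. adjoint G f x \<noteq> 0}" using t by (auto simp: adjoint_def)
next
  fix s assume s: "s \<in> {x \<in> carrier G. adjoint G f x \<noteq> 0}"
  then show "inv (inv s) = s" by auto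
  show "inv s \<in> {x \<in> carrier G. f x \<noteq> 0}" using s by (auto simp: adjoint_def)
  show "real_of_int (f (inv s)) * v (inv s \<otimes> y) = real_of_int (adjoint G f s) * v (inv s \<otimes> y)"
    using s by (auto simp: adjoint_def)
qed

lemma lconv_lin:
  fixes f :: "'a \<Rightarrow> int"
  assumes "finite I"
  shows "lconv G f (\<lambda>x. c * a x - (\<Sum>i\<in>I. d i * b i x)) y = c * lconv G f a y - (\<Sum>i\<in>I. d i * lconv G f (b i) y)"
  unfolding lconv_def
  by (simp add: algebra_simps sum_subtractf sum_distrib_left sum.swap[of _ I])

lemma lconv_supp:
  fixes f u :: "'a \<Rightarrow> int"
  assumes F: "F \<subseteq> carrier G" and u: "\<forall>x. x \<notin> F \<longrightarrow> u x = 0"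
    and y: "y \<notin> (\<lambda>(s, x). s \<otimes> x) ` ({x \<in> carrier G. f x \<noteq> 0} \<times> F)"
  shows "lconv G f u y = 0"
proof (cases "y \<in> carrier G")
  case True
  have "f s * u (inv s \<otimes> y) = 0" if s: "s \<in> {x \<in> carrier G. f x \<noteq> 0}" for s
  proof (rule ccontr)
    assume "f s * u (inv s \<otimes> y) \<noteq> 0"
    then have "inv s \<otimes> y \<in> F" using u by auto
    moreover have "s \<otimes> (inv s \<otimes> y) = y" using s True by (simp add: m_assoc[symmetric])
    ultimately have "y \<in> (\<lambda>(s, x). s \<otimes> x) ` ({x \<in> carrier G. f x \<noteq> 0} \<times> F)"
      using s by (metis (no_types, lifting) SigmaI case_prod_conv image_eqI)
    then show False using y by simp
  qed
  then show ?thesis unfolding lconv_def by simp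
qed (simp add: lconv_def)

lemma key_orth:
  fixes f u :: "'a \<Rightarrow> int" and v :: "'a \<Rightarrow> real"
  assumes F: "F \<subseteq> carrier G" "finite F" and u: "\<forall>x. x \<notin> F \<longrightarrow> u x = 0"
    and fin: "finite {x \<in> carrier G. f x \<noteq> 0}"
    and ker: "lconv G (\<lambda>x. real_of_int (adjoint G f x)) v = (\<lambda>_. 0)"
    and g: "g \<in> carrier G"
  shows "(\<Sum>z\<in>(\<lambda>(s, x). s \<otimes> x) ` ({x \<in> carrier G. f x \<noteq> 0} \<times> F).
            real_of_int (lconv G f u z) * v (z \<otimes> g)) = 0"
proof -
  define S where "S = {x \<in> carrier G. f x \<noteq> 0}"
  define E where "E = (\<lambda>(s, x). s \<otimes> x) ` (S \<times> F)"
  have EG: "E \<subseteq> carrier G" unfolding E_def S_def using F by auto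
  have finE: "finite E" unfolding E_def using fin F S_def by auto
  have inner: "(\<Sum>z\<in>E. real_of_int (u (inv s \<otimes> z)) * v (z \<otimes> g)) = (\<Sum>x\<in>F. real_of_int (u x) * v (s \<otimes> x \<otimes> g))"
    if s: "s \<in> S" for s
  proof -
    have sG: "s \<in> carrier G" using s S_def by auto
    have sub: "(\<lambda>x. s \<otimes> x) ` F \<subseteq> E" unfolding E_def using s by auto
    have "(\<Sum>z\<in>E. real_of_int (u (inv s \<otimes> z)) * v (z \<otimes> g)) =
          (\<Sum>z\<in>(\<lambda>x. s \<otimes> x) ` F. real_of_int (u (inv s \<otimes> z)) * v (z \<otimes> g))"
    proof (rule sum.mono_neutral_right[OF finE sub])
      show "\<forall>z\<in>E - (\<lambda>x. s \<otimes> x) ` F. real_of_int (u (inv s \<otimes> z)) * v (z \<otimes> g) = 0"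
      proof
        fix z assume z: "z \<in> E - (\<lambda>x. s \<otimes> x) ` F"
        then have zG: "z \<in> carrier G" using EG by auto
        have "inv s \<otimes> z \<notin> F"
        proof
          assume "inv s \<otimes> z \<in> F"
          moreover have "s \<otimes> (inv s \<otimes> z) = z" using sG zG by (simp add: m_assoc[symmetric])
          ultimately show False using z by (metis DiffE image_eqI)
        qed
        then show "real_of_int (u (inv s \<otimes> z)) * v (z \<otimes> g) = 0" using u by simp
      qed
    qed
    also have "\<dots> = (\<Sum>x\<in>F. real_of_int (u (inv s \<otimes> (s \<otimes> x))) * v (s \<otimes> x \<otimes> g))"
      using sG F by (subst sum.reindex) (auto intro!: inj_onI simp: subset_iff)
    also have "\<dots> = (\<Sum>x\<in>F. real_of_int (u x) * v (s \<otimes> x \<otimes> g))"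
      by (rule sum.cong) (use sG F in \<open>auto simp: m_assoc[symmetric]\<close>)
    finally show ?thesis .
  qed
  have "(\<Sum>z\<in>E. real_of_int (lconv G f u z) * v (z \<otimes> g))
      = (\<Sum>z\<in>E. \<Sum>s\<in>S. real_of_int (f s) * (real_of_int (u (inv s \<otimes> z)) * v (z \<otimes> g)))"
    by (rule sum.cong) (use EG in \<open>auto simp: lconv_def S_def sum_distrib_right mult.assoc\<close>)
  also have "\<dots> = (\<Sum>s\<in>S. real_of_int (f s) * (\<Sum>z\<in>E. real_of_int (u (inv s \<otimes> z)) * v (z \<otimes> g)))"
    by (subst sum.swap) (simp add: sum_distrib_left)
  also have "\<dots> = (\<Sum>s\<in>S. \<Sum>x\<in>F. real_of_int (f s) * (real_of_int (u x) * v (s \<otimes> x \<otimes> g)))"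
    by (rule sum.cong) (auto simp: inner sum_distrib_left)
  also have "\<dots> = (\<Sum>x\<in>F. real_of_int (u x) * (\<Sum>s\<in>S. real_of_int (f s) * v (s \<otimes> (x \<otimes> g))))"
    by (subst sum.swap) (rule sum.cong, simp, use F S_def g in \<open>auto simp: sum_distrib_left m_assoc mult.left_commute subset_iff intro!: sum.cong\<close>)
  also have "\<dots> = (\<Sum>x\<in>F. real_of_int (u x) * lconv G (\<lambda>x. real_of_int (adjoint G f x)) v (x \<otimes> g))"
    by (rule sum.cong) (use F g in \<open>auto simp: adj_conv S_def\<close>)
  also have "\<dots> = 0" using ker by simp
  finally show ?thesis unfolding E_def S_def .
qed

end
context group begin

lemma ker_left_zd:
  fixes f :: "'a \<Rightarrow> int" and v :: "'a \<Rightarrow> real"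
  assumes am: "amenable G" and fG: "f \<in> group_ring G" and vl2: "v \<in> l2 G"
    and vnz: "v \<noteq> (\<lambda>_. 0)"
    and ker: "lconv G (\<lambda>x. real_of_int (adjoint G f x)) v = (\<lambda>_. 0)"
  shows "left_zero_divisor G f"
proof (rule ccontr)
  assume nlzd: "\<not> left_zero_divisor G f"
  obtain x0 where vx0: "v x0 \<noteq> 0" using vnz by auto
  have x0G: "x0 \<in> carrier G" using vx0 vl2 l2_out by blast
  define a where "a = v x0"
  define N where "N = infsum (\<lambda>x. (v x)\<^sup>2) (carrier G)"
  have summ: "(\<lambda>x. (v x)\<^sup>2) summable_on carrier G" using vl2 by (simp add: l2_def)
  have partial: "(\<Sum>x\<in>B. (v x)\<^sup>2) \<le> N" if "finite B" "B \<subseteq> carrier G" for B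
    unfolding N_def by (rule finite_sum_le_infsum[OF summ that]) simp
  have aN: "a\<^sup>2 \<le> N" using partial[of "{x0}"] x0G by (simp add: a_def)
  have a2pos: "a\<^sup>2 > 0" using vx0 by (simp add: a_def)
  have Npos: "N > 0" using aN a2pos by linarith
  define c where "c = a\<^sup>2 / N"
  have cpos: "c > 0" and cle: "c \<le> 1" using aN a2pos Npos by (auto simp: c_def)
  define S where "S = {x \<in> carrier G. f x \<noteq> 0}"
  have finS: "finite S" using fG by (simp add: S_def group_ring_def)
  define \<epsilon> where "\<epsilon> = c / (1 + real (card S))"
  have \<epsilon>pos: "\<epsilon> > 0" using cpos by (simp add: \<epsilon>_def)
  obtain F where finF: "finite F" and Fne: "F \<noteq> {}" and FG: "F \<subseteq> carrier G"
    and fol: "\<forall>g\<in>S. real (card (((\<lambda>x. g \<otimes> x) ` F - F) \<union> (F - (\<lambda>x. g \<otimes> x) ` F))) < \<epsilon> * real (card F)"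
    using am finS \<epsilon>pos unfolding amenable_def S_def by (metis (no_types, lifting) mem_Collect_eq subsetI)
  define E where "E = (\<lambda>(s, x). s \<otimes> x) ` (S \<times> F)"
  have finE: "finite E" unfolding E_def using finS finF by simp
  have EG: "E \<subseteq> carrier G" unfolding E_def S_def using FG by auto
  define L where "L = lconv G f"
  have GSres: "(\<exists>u. (\<forall>x. x \<notin> F \<longrightarrow> u x = 0) \<and> u \<noteq> (\<lambda>_. 0) \<and> L u = (\<lambda>_. 0)) \<or>
         (\<exists>U. finite U \<and> card U = card F \<and> (\<forall>u\<in>U. \<forall>x. x \<notin> F \<longrightarrow> u x = 0) \<and>
              (\<forall>u\<in>U. ipE E (L u) (L u) \<noteq> 0) \<and>
              (\<forall>u\<in>U. \<forall>w\<in>U. u \<noteq> w \<longrightarrow> ipE E (L u) (L w) = 0))"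
  proof (rule GS[where F=F])
    show "L (\<lambda>x. c * a x - (\<Sum>i\<in>I. d i * b i x)) y = c * L a y - (\<Sum>i\<in>I. d i * L (b i) y)"
      if "finite I" for c a d b and I :: "('a \<Rightarrow> int) set" and y
      unfolding L_def by (rule lconv_lin[OF that])
    show "L u y = 0" if "\<forall>x. x \<notin> F \<longrightarrow> u x = 0" "y \<notin> E" for u y
      unfolding L_def using lconv_supp[OF FG that(1)] that(2) unfolding E_def S_def by blast
  qed (use finE finF in auto)
  then obtain U where finU: "finite U" and cardU: "card U = card F"
      and Usupp: "\<forall>u\<in>U. \<forall>x. x \<notin> F \<longrightarrow> u x = 0"
      and Unz: "\<forall>u\<in>U. ipE E (L u) (L u) \<noteq> 0"
      and Uorth: "\<forall>u\<in>U. \<forall>w\<in>U. u \<noteq> w \<longrightarrow> ipE E (L u) (L w) = 0"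
  proof (elim disjE exE conjE)
    fix u assume u: "\<forall>x. x \<notin> F \<longrightarrow> u x = 0" "u \<noteq> (\<lambda>_. 0)" "L u = (\<lambda>_. 0)"
    have "u \<in> group_ring G"
    proof -
      have "{x \<in> carrier G. u x \<noteq> 0} \<subseteq> F" using u(1) by auto
      then have "finite {x \<in> carrier G. u x \<noteq> 0}" using finF finite_subset by blast
      then show ?thesis using u(1) FG by (auto simp: group_ring_def)
    qed
    then have "left_zero_divisor G f" using u unfolding left_zero_divisor_def L_def by blast
    then show ?thesis using nlzd by blast
  qed
  define w where "w u y = real_of_int (L u y)" for u y
  define r where "r y z = v (z \<otimes> (inv y \<otimes> x0))" for y z
  have bound: "real (card U) \<le> real (card E) * (1 - a\<^sup>2 / N)"
  proof (rule count_bound[where w=w and r=r])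
    show "finite U" "finite E" "N > 0" by (fact finU, fact finE, fact Npos)
    show "\<forall>i\<in>U. (\<Sum>z\<in>E. (w i z)\<^sup>2) \<noteq> 0"
    proof
      fix i assume "i \<in> U"
      then have "ipE E (L i) (L i) \<noteq> 0" using Unz by blast
      then have "real_of_int (ipE E (L i) (L i)) \<noteq> 0" by simp
      then show "(\<Sum>z\<in>E. (w i z)\<^sup>2) \<noteq> 0" by (simp add: ipE_def w_def power2_eq_square)
    qed
    show "\<forall>i\<in>U. \<forall>j\<in>U. i \<noteq> j \<longrightarrow> (\<Sum>z\<in>E. w i z * w j z) = 0"
    proof (intro ballI impI)
      fix i j assume "i \<in> U" "j \<in> U" "i \<noteq> j"
      then have "ipE E (L i) (L j) = 0" using Uorth by blast
      then have "real_of_int (ipE E (L i) (L j)) = 0" by simp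
      then show "(\<Sum>z\<in>E. w i z * w j z) = 0" by (simp add: ipE_def w_def)
    qed
    show "\<forall>y\<in>E. \<forall>i\<in>U. (\<Sum>z\<in>E. w i z * r y z) = 0"
    proof (intro ballI)
      fix y i assume y: "y \<in> E" and i: "i \<in> U"
      have g: "inv y \<otimes> x0 \<in> carrier G" using y EG x0G by auto
      show "(\<Sum>z\<in>E. w i z * r y z) = 0"
        using key_orth[OF FG finF _ _ ker g, of i] Usupp i finS
        unfolding w_def r_def L_def E_def S_def by blast
    qed
    show "\<forall>y\<in>E. r y y = a"
    proof
      fix y assume "y \<in> E"
      then have "y \<in> carrier G" using EG by auto
      then show "r y y = a" unfolding r_def a_def using x0G by (simp add: m_assoc[symmetric])
    qed
    show "\<forall>y\<in>E. (\<Sum>z\<in>E. (r y z)\<^sup>2) \<le> N"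
    proof
      fix y assume "y \<in> E"
      then have g: "inv y \<otimes> x0 \<in> carrier G" using EG x0G by auto
      have inj: "inj_on (\<lambda>z. z \<otimes> (inv y \<otimes> x0)) E"
        using g EG by (intro inj_onI) (auto simp: subset_iff)
      have "(\<Sum>z\<in>E. (r y z)\<^sup>2) = (\<Sum>x\<in>(\<lambda>z. z \<otimes> (inv y \<otimes> x0)) ` E. (v x)\<^sup>2)"
        unfolding r_def by (simp add: sum.reindex[OF inj])
      also have "\<dots> \<le> N" by (rule partial) (use finE g EG in auto)
      finally show "(\<Sum>z\<in>E. (r y z)\<^sup>2) \<le> N" .
    qed
  qed
  then have b2: "real (card F) \<le> real (card E) * (1 - c)" using cardU by (simp add: c_def)
  have cardF: "real (card F) > 0" using finF Fne by (simp add: card_gt_0_iff)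
  show False
  proof (cases "S = {}")
    case True
    then have "E = {}" unfolding E_def by simp
    then show False using b2 cardF by simp
  next
    case Sne: False
    have Esub: "E \<subseteq> F \<union> (\<Union>s\<in>S. (\<lambda>x. s \<otimes> x) ` F - F)" unfolding E_def by auto
    have c1: "card E \<le> card (F \<union> (\<Union>s\<in>S. (\<lambda>x. s \<otimes> x) ` F - F))"
      by (rule card_mono) (use finF finS Esub in auto)
    have c2: "card (F \<union> (\<Union>s\<in>S. (\<lambda>x. s \<otimes> x) ` F - F)) \<le> card F + card (\<Union>s\<in>S. (\<lambda>x. s \<otimes> x) ` F - F)"
      by (rule card_Un_le)
    have c3: "card (\<Union>s\<in>S. (\<lambda>x. s \<otimes> x) ` F - F) \<le> (\<Sum>s\<in>S. card ((\<lambda>x. s \<otimes> x) ` F - F))"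
      by (rule card_UN_le[OF finS])
    have "card E \<le> card F + (\<Sum>s\<in>S. card ((\<lambda>x. s \<otimes> x) ` F - F))" using c1 c2 c3 by linarith
    then have "real (card E) \<le> real (card F + (\<Sum>s\<in>S. card ((\<lambda>x. s \<otimes> x) ` F - F)))"
      by (simp only: of_nat_le_iff)
    then have cE: "real (card E) \<le> real (card F) + (\<Sum>s\<in>S. real (card ((\<lambda>x. s \<otimes> x) ` F - F)))"
      by simp
    have each: "real (card ((\<lambda>x. s \<otimes> x) ` F - F)) < \<epsilon> * real (card F)" if "s \<in> S" for s
    proof -
      have "card ((\<lambda>x. s \<otimes> x) ` F - F) \<le> card (((\<lambda>x. s \<otimes> x) ` F - F) \<union> (F - (\<lambda>x. s \<otimes> x) ` F))"
        by (rule card_mono) (use finF in auto)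
      then show ?thesis using fol that by fastforce
    qed
    have "(\<Sum>s\<in>S. real (card ((\<lambda>x. s \<otimes> x) ` F - F))) < (\<Sum>s\<in>S. \<epsilon> * real (card F))"
      by (rule sum_strict_mono[OF finS Sne each])
    then have cE2: "real (card E) < real (card F) * (1 + real (card S) * \<epsilon>)"
      using cE by (simp add: algebra_simps)
    have ke: "real (card S) * \<epsilon> \<le> c"
      unfolding \<epsilon>_def using cpos by (simp add: field_simps)
    show False
    proof (cases "c = 1")
      case True then show False using b2 cardF by simp
    next
      case False
      then have pos: "1 - c > 0" using cle by simp
      have "real (card F) \<le> real (card E) * (1 - c)" by (fact b2)
      also have "\<dots> < real (card F) * (1 + real (card S) * \<epsilon>) * (1 - c)"
        using cE2 pos by (simp add: mult_strict_right_mono)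
      also have "\<dots> \<le> real (card F) * (1 + c) * (1 - c)"
        using ke pos cardF by (intro mult_right_mono mult_left_mono) auto
      also have "\<dots> = real (card F) * (1 - c * c)" by (simp add: algebra_simps)
      also have "\<dots> \<le> real (card F)" using cardF cpos by (simp add: mult_left_le)
      finally show False by simp
    qed
  qed
qed

end

lemma nontriv_iff:
  assumes "P (\<lambda>_. 0)" "(\<lambda>_. 0) \<in> A"
  shows "{v \<in> A. P v} \<noteq> {\<lambda>_. 0} \<longleftrightarrow> (\<exists>v\<in>A. v \<noteq> (\<lambda>_. 0) \<and> P v)"
  using assms by blast

theorem proposition1p4:
  fixes G :: "('a, 'b) monoid_scheme" and f :: "'a \<Rightarrow> int"
  assumes "group G" and "countable (carrier G)" and "infinite (carrier G)"
    and "amenable G" and "f \<in> group_ring G"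
  shows "(right_zero_divisor G f
            \<longleftrightarrow> {v \<in> l2 G. lconv G (\<lambda>x. real_of_int (adjoint G f x)) v = (\<lambda>_. 0)} \<noteq> {\<lambda>_. 0})
       \<and> ({v \<in> l2 G. lconv G (\<lambda>x. real_of_int (adjoint G f x)) v = (\<lambda>_. 0)} \<noteq> {\<lambda>_. 0}
            \<longleftrightarrow> left_zero_divisor G f)
       \<and> (left_zero_divisor G f
            \<longleftrightarrow> {v \<in> l2 G. lconv G (\<lambda>x. real_of_int (f x)) v = (\<lambda>_. 0)} \<noteq> {\<lambda>_. 0})
       \<and> ({v \<in> l2 G. lconv G (\<lambda>x. real_of_int (f x)) v = (\<lambda>_. 0)} \<noteq> {\<lambda>_. 0}
            \<longleftrightarrow> {v \<in> l2 G. rconv G v (\<lambda>x. real_of_int (adjoint G f x)) = (\<lambda>_. 0)} \<noteq> {\<lambda>_. 0})"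
proof -
  interpret group G by fact
  note fG = assms(5)
  have zl2: "(\<lambda>_. 0::real) \<in> l2 G" by (rule l2_fin) auto
  have lz: "lconv G a (\<lambda>_. 0::real) = (\<lambda>_. 0)" for a :: "'a \<Rightarrow> real"
    by (simp add: lconv_def fun_eq_iff)
  have rz: "rconv G (\<lambda>_. 0::real) b = (\<lambda>_. 0)" for b :: "'a \<Rightarrow> real"
    by (simp add: rconv_def fun_eq_iff)
  define K2 where "K2 \<longleftrightarrow> {v \<in> l2 G. lconv G (\<lambda>x. real_of_int (adjoint G f x)) v = (\<lambda>_. 0)} \<noteq> {\<lambda>_. 0}"
  define K4 where "K4 \<longleftrightarrow> {v \<in> l2 G. lconv G (\<lambda>x. real_of_int (f x)) v = (\<lambda>_. 0)} \<noteq> {\<lambda>_. 0}"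
  define K5 where "K5 \<longleftrightarrow> {v \<in> l2 G. rconv G v (\<lambda>x. real_of_int (adjoint G f x)) = (\<lambda>_. 0)} \<noteq> {\<lambda>_. 0}"
  have K2: "K2 \<longleftrightarrow> (\<exists>v\<in>l2 G. v \<noteq> (\<lambda>_. 0) \<and> lconv G (\<lambda>x. real_of_int (adjoint G f x)) v = (\<lambda>_. 0))"
    unfolding K2_def by (rule nontriv_iff) (use lz zl2 in auto)
  have K4: "K4 \<longleftrightarrow> (\<exists>v\<in>l2 G. v \<noteq> (\<lambda>_. 0) \<and> lconv G (\<lambda>x. real_of_int (f x)) v = (\<lambda>_. 0))"
    unfolding K4_def by (rule nontriv_iff) (use lz zl2 in auto)
  have K5: "K5 \<longleftrightarrow> (\<exists>v\<in>l2 G. v \<noteq> (\<lambda>_. 0) \<and> rconv G v (\<lambda>x. real_of_int (adjoint G f x)) = (\<lambda>_. 0))"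
    unfolding K5_def by (rule nontriv_iff) (use rz zl2 in auto)
  have cast_gr: "(\<lambda>x. real_of_int (g x)) \<in> l2 G" if "g \<in> group_ring G" for g
    by (rule l2_fin) (use that in \<open>auto simp: group_ring_def\<close>)
  have cast_nz: "(\<lambda>x. real_of_int (g x)) \<noteq> (\<lambda>_. 0)" if "g \<noteq> (\<lambda>_. 0)" for g :: "'a \<Rightarrow> int"
    using that by (auto simp: fun_eq_iff)
  have antizero: "lconv G (adjoint G b) (adjoint G a) = (\<lambda>_. 0)"
    if "a \<in> group_ring G" "b \<in> group_ring G" "lconv G a b = (\<lambda>_. 0)" for a b
  proof
    fix y show "lconv G (adjoint G b) (adjoint G a) y = 0"
    proof (cases "y \<in> carrier G")
      case True then show ?thesis using antihom[OF that(1,2) True] that(3) by simp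
    qed (simp add: lconv_out)
  qed
  have adjcast: "(\<lambda>x. real_of_int (adjoint G g x)) = adjoint G (\<lambda>x. real_of_int (g x))" for g
    by (auto simp: adjoint_def fun_eq_iff)
  have i12: "K2" if hyp: "right_zero_divisor G f"
  proof -
    obtain g where g: "g \<in> group_ring G" "g \<noteq> (\<lambda>_. 0)" "lconv G g f = (\<lambda>_. 0)"
      using hyp unfolding right_zero_divisor_def by blast
    have ag: "adjoint G g \<in> group_ring G" by (rule adjoint_gr[OF g(1)])
    have agnz: "adjoint G g \<noteq> (\<lambda>_. 0)" using g(1,2) adjoint_zero_iff[of g] gr_out by blast
    have "lconv G (adjoint G f) (adjoint G g) = (\<lambda>_. 0)" by (rule antizero[OF g(1) fG g(3)])
    then have "lconv G (\<lambda>x. real_of_int (adjoint G f x)) (\<lambda>x. real_of_int (adjoint G g x)) = (\<lambda>_. 0)"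
      by (simp add: lconv_cast)
    then show ?thesis unfolding K2 using cast_gr[OF ag] cast_nz[OF agnz] by blast
  qed
  have i23: "left_zero_divisor G f" if K2
    using that unfolding K2 using ker_left_zd[OF assms(4) fG] by blast
  have i34: "K4" if hyp: "left_zero_divisor G f"
  proof -
    obtain g where g: "g \<in> group_ring G" "g \<noteq> (\<lambda>_. 0)" "lconv G f g = (\<lambda>_. 0)"
      using hyp unfolding left_zero_divisor_def by blast
    have "lconv G (\<lambda>x. real_of_int (f x)) (\<lambda>x. real_of_int (g x)) = (\<lambda>_. 0)"
      using g(3) by (simp add: lconv_cast)
    then show ?thesis unfolding K4 using cast_gr[OF g(1)] cast_nz[OF g(2)] by blast
  qed
  have i41: "right_zero_divisor G f" if hyp: K4
  proof -
    obtain v where v: "v \<in> l2 G" "v \<noteq> (\<lambda>_. 0)" "lconv G (\<lambda>x. real_of_int (f x)) v = (\<lambda>_. 0)"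
      using hyp unfolding K4 by blast
    define h where "h = adjoint G f"
    have hG: "h \<in> group_ring G" unfolding h_def by (rule adjoint_gr[OF fG])
    have ah: "adjoint G h = f" unfolding h_def by (rule adjoint_adjoint) (use fG gr_out in auto)
    have "lconv G (\<lambda>x. real_of_int (adjoint G h x)) v = (\<lambda>_. 0)" using v(3) ah by simp
    then have "left_zero_divisor G h" using ker_left_zd[OF assms(4) hG v(1,2)] by blast
    then obtain g where g: "g \<in> group_ring G" "g \<noteq> (\<lambda>_. 0)" "lconv G h g = (\<lambda>_. 0)"
      unfolding left_zero_divisor_def by blast
    have "lconv G (adjoint G g) f = (\<lambda>_. 0)" using antizero[OF hG g(1) g(3)] ah by simp
    moreover have "adjoint G g \<in> group_ring G" by (rule adjoint_gr[OF g(1)])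
    moreover have "adjoint G g \<noteq> (\<lambda>_. 0)" using g(1,2) adjoint_zero_iff[of g] gr_out by blast
    ultimately show ?thesis unfolding right_zero_divisor_def by blast
  qed
  have i45: "K4 \<longleftrightarrow> K5"
  proof
    assume K4
    then obtain v where v: "v \<in> l2 G" "v \<noteq> (\<lambda>_. 0)" "lconv G (\<lambda>x. real_of_int (f x)) v = (\<lambda>_. 0)"
      unfolding K4 by blast
    define u where "u = adjoint G v"
    have ul2: "u \<in> l2 G" unfolding u_def by (rule l2_adjoint[OF v(1)])
    have au: "adjoint G u = v" unfolding u_def by (rule adjoint_adjoint) (use v(1) l2_out in auto)
    have unz: "u \<noteq> (\<lambda>_. 0)"
    proof
      assume "u = (\<lambda>_. 0)"
      then have "adjoint G u = (\<lambda>_. 0)" by (simp add: adjoint_def fun_eq_iff)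
      with au v(2) show False by simp
    qed
    have "rconv G u (adjoint G (\<lambda>x. real_of_int (f x))) = (\<lambda>_. 0)"
      using rconv_zero_iff[of u "\<lambda>x. real_of_int (f x)"] au v(3) by simp
    then show K5 unfolding K5 adjcast using ul2 unz by blast
  next
    assume K5
    then obtain u where u: "u \<in> l2 G" "u \<noteq> (\<lambda>_. 0)" "rconv G u (adjoint G (\<lambda>x. real_of_int (f x))) = (\<lambda>_. 0)"
      unfolding K5 adjcast by blast
    have l: "lconv G (\<lambda>x. real_of_int (f x)) (adjoint G u) = (\<lambda>_. 0)"
      using rconv_zero_iff[of u "\<lambda>x. real_of_int (f x)"] u(3) by simp
    have "adjoint G u \<noteq> (\<lambda>_. 0)" using u(1,2) adjoint_zero_iff[of u] l2_out by blast
    then show K4 unfolding K4 using l l2_adjoint[OF u(1)] by blast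
  qed
  show ?thesis
    using i12 i23 i34 i41 i45 unfolding K2_def[symmetric] K4_def[symmetric] K5_def[symmetric] by blast
qed

end
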